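(* Let $C$ be an $A$-code of length $2$. Then $C$ is self-dual ($C=C^\perp$) if and only if either its canonical generator matrix is $(1\ \ g_2)$ with $g_2^2=-1$ in $A$, or its canonical generator matrix is $\begin{pmatrix}g_1&g_2\\0&g_3\end{pmatrix}$ (with $g_1,g_3$ nonzero monic divisors of $f$, $g_3\mid (f/g_1)g_2$, $\deg g_2<\deg g_3$) and there exist $g',f',r\in\mathbb{F}[x]$ with $g'^2=rf'-1$, $f=g_1^2f'$, $g_3=g_1f'$ and $g_2=g_1g'$.
   Context: Let $\mathbb{F}$ be a finite field, $f(x)\in\mathbb{F}[x]$ monic of degree $m$, $A=\mathbb{F}[x]/\langle f(x)\rangle$, elements identified with polynomials of degree $<m$. An $A$-code of length $l$ is an $A$-submodule of $A^l$; $C^\perp=\{a\in A^l:\sum_ia_ic_i=0\ \forall c\in C\}$. The canonical generator matrix (CGM) of a nonzero $A$-code $C$ is the unique matrix over $A$ whose rows generate $C$, are monic with strictly increasing leading indices (position of first nonzero entry), have leading entries dividing $f$, satisfy that $(f/L_i)\cdot(\text{row }i)$ is an $A$-combination of later rows ($L_i$ the leading entry of row $i$), and such that every entry above a leading entry has smaller degree than it. *)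

theory Defs
  imports "HOL-Computational_Algebra.Polynomial"
begin

text \<open>The ring A = F[x]/<f> is represented by the polynomials p with p mod f = p
  (i.e. degree p < degree f); arithmetic in A is polynomial arithmetic followed by mod f.\<close>

definition in_A :: "'a::field poly \<Rightarrow> 'a poly \<Rightarrow> bool" where
  "in_A f p \<longleftrightarrow> p mod f = p"

definition Avec :: "'a::field poly \<Rightarrow> nat \<Rightarrow> 'a poly list set" where
  "Avec f l = {v. length v = l \<and> (\<forall>x\<in>set v. in_A f x)}"

definition vadd :: "'a::field poly \<Rightarrow> 'a poly list \<Rightarrow> 'a poly list \<Rightarrow> 'a poly list" where
  "vadd f u v = map2 (\<lambda>x y. (x + y) mod f) u v"

definition smul :: "'a::field poly \<Rightarrow> 'a poly \<Rightarrow> 'a poly list \<Rightarrow> 'a poly list" where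
  "smul f a v = map (\<lambda>x. (a * x) mod f) v"

definition is_code :: "'a::field poly \<Rightarrow> nat \<Rightarrow> 'a poly list set \<Rightarrow> bool" where
  "is_code f l C \<longleftrightarrow> C \<subseteq> Avec f l \<and> replicate l 0 \<in> C \<and>
     (\<forall>u\<in>C. \<forall>v\<in>C. vadd f u v \<in> C) \<and>
     (\<forall>a. in_A f a \<longrightarrow> (\<forall>v\<in>C. smul f a v \<in> C))"

definition dual :: "'a::field poly \<Rightarrow> nat \<Rightarrow> 'a poly list set \<Rightarrow> 'a poly list set" where
  "dual f l C = {a \<in> Avec f l. \<forall>c\<in>C. (\<Sum>i<l. a ! i * c ! i) mod f = 0}"

definition lin_comb :: "'a::field poly \<Rightarrow> nat \<Rightarrow> 'a poly list list \<Rightarrow> (nat \<Rightarrow> 'a poly) \<Rightarrow> 'a poly list" where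
  "lin_comb f l rs c = map (\<lambda>i. (\<Sum>j<length rs. c j * rs ! j ! i) mod f) [0..<l]"

definition span :: "'a::field poly \<Rightarrow> nat \<Rightarrow> 'a poly list list \<Rightarrow> 'a poly list set" where
  "span f l rs = {lin_comb f l rs c | c. \<forall>j. in_A f (c j)}"

definition lidx :: "'a::zero list \<Rightarrow> nat" where
  "lidx v = (LEAST i. i < length v \<and> v ! i \<noteq> 0)"

definition lent :: "'a::zero list \<Rightarrow> 'a" where
  "lent v = v ! lidx v"

text \<open>G is the canonical generator matrix of the A-code C of length l.
  (Degree of the zero polynomial is treated as -infinity.)\<close>
definition is_CGM :: "'a::field poly \<Rightarrow> nat \<Rightarrow> 'a poly list set \<Rightarrow> 'a poly list list \<Rightarrow> bool" where
  "is_CGM f l C G \<longleftrightarrow>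
     G \<noteq> [] \<and> (\<forall>r\<in>set G. r \<in> Avec f l \<and> (\<exists>i<l. r ! i \<noteq> 0)) \<and>
     span f l G = C \<and>
     (\<forall>i j. i < j \<and> j < length G \<longrightarrow> lidx (G ! i) < lidx (G ! j)) \<and>
     (\<forall>r\<in>set G. lead_coeff (lent r) = 1 \<and> lent r dvd f) \<and>
     (\<forall>i<length G. smul f (f div lent (G ! i)) (G ! i) \<in> span f l (drop (Suc i) G)) \<and>
     (\<forall>i j. j < i \<and> i < length G \<longrightarrow>
        G ! j ! lidx (G ! i) = 0 \<or> degree (G ! j ! lidx (G ! i)) < degree (lent (G ! i)))"

end

theory Submission
  imports Defs
begin


lemma bezout_ex: "\<exists>d x y. d = x*a + y*b \<and> d dvd a \<and> d dvd (b::'a::field poly)"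
proof (induction "if b = 0 then 0 else Suc (degree b)" arbitrary: a b rule: less_induct)
  case less
  show ?case
  proof (cases "b = 0")
    case True then show ?thesis by (intro exI[of _ a] exI[of _ 1] exI[of _ 0]) auto
  next
    case False
    have lt: "(if a mod b = 0 then 0 else Suc (degree (a mod b))) < (if b = 0 then 0 else Suc (degree b))"
      using False degree_mod_less[OF False, of a] by auto
    from less[OF lt] obtain d x y where d: "d = x*b + y*(a mod b)" "d dvd b" "d dvd a mod b" by blast
    have am: "a mod b = a - (a div b) * b" by (simp add: minus_div_mult_eq_mod)
    have "d = y*a + (x - y*(a div b))*b" using d(1) am by (simp add: algebra_simps)
    moreover have "d dvd a" using d(2,3) by (metis dvd_mod_iff)
    ultimately show ?thesis using d(2) by blast
  qed
qed

lemma sq_dvd_sq: assumes "(a::'a::field poly)^2 dvd b^2" shows "a dvd b"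
proof (cases "a = 0")
  case True then show ?thesis using assms by simp
next
  case False
  obtain d x y where d: "d = x*a + y*b" "d dvd a" "d dvd b" using bezout_ex by blast
  obtain a' where a': "a = d*a'" using d(2) by (rule dvdE)
  obtain b' where b': "b = d*b'" using d(3) by (rule dvdE)
  have d0: "d \<noteq> 0" using False a' by auto
  have "d * 1 = d * (x*a' + y*b')" using d(1) a' b' by (simp add: algebra_simps)
  then have one: "1 = x*a' + y*b'" using d0 by simp
  have "(d^2)*a'^2 dvd (d^2)*b'^2" using assms unfolding a' b' by (simp only: power_mult_distrib)
  then have "a'^2 dvd b'^2" using d0 by (simp only: dvd_mult_cancel_left power_eq_0_iff) simp
  then have "a' dvd b'^2" by (rule dvd_trans[rotated]) (simp add: power2_eq_square)
  then have h: "a' dvd y^2*b'^2" by (rule dvd_mult)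
  have "y^2*b'^2 = (y*b')^2" by (simp add: power_mult_distrib)
  also have "y*b' = 1 - x*a'" using one by (simp add: algebra_simps)
  also have "(1 - x*a')^2 = 1 - a'*(2*x - x^2*a')" by (simp add: power2_eq_square algebra_simps)
  finally have "a' dvd 1 - a'*(2*x - x^2*a')" using h by simp
  moreover have "a' dvd a'*(2*x - x^2*a')" by simp
  ultimately have "a' dvd (1 - a'*(2*x - x^2*a')) + a'*(2*x - x^2*a')" by (rule dvd_add)
  then have "a' dvd 1" by simp
  then have "a' dvd b'" using one_dvd dvd_trans by blast
  then show ?thesis unfolding a' b' by simp
qed
lemma inA_iff: "(f::'a::field poly) \<noteq> 0 \<Longrightarrow> in_A f p \<longleftrightarrow> (p = 0 \<or> degree p < degree f)"
  unfolding in_A_def using degree_mod_less[of f p] mod_poly_less[of p f] by auto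

lemma Avec2: "v \<in> Avec f 2 \<longleftrightarrow> (\<exists>a b. v = [a,b] \<and> in_A f a \<and> in_A f b)"
proof
  assume "v \<in> Avec f 2"
  then have "length v = 2" "\<forall>x\<in>set v. in_A f x" by (auto simp: Avec_def)
  then show "\<exists>a b. v = [a,b] \<and> in_A f a \<and> in_A f b"
    by (cases v; cases "tl v"; auto)
qed (auto simp: Avec_def)

lemma vadd2[simp]: "vadd f [a,b] [c,d] = [(a+c) mod f, (b+d) mod f]"
  by (simp add: vadd_def)
lemma smul2[simp]: "smul f k [a,b] = [(k*a) mod f, (k*b) mod f]"
  by (simp add: smul_def)

lemma sum2: "(\<Sum>i<2. g i) = g 0 + g (1::nat)"
  by (simp add: numeral_2_eq_2)

lemma dual2: "[a,b] \<in> dual f 2 C \<longleftrightarrow> in_A f a \<and> in_A f b \<and> (\<forall>c\<in>C. (a*c!0 + b*c!1) mod f = 0)"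
  by (auto simp: dual_def Avec_def sum2)

lemma dual2': "v \<in> dual f 2 C \<longleftrightarrow> (\<exists>a b. v = [a,b] \<and> in_A f a \<and> in_A f b \<and> (\<forall>c\<in>C. (a*c!0 + b*c!1) mod f = 0))"
  by (auto simp: dual_def Avec2 sum2)

lemma span0: "span f 2 [] = {[0,0]}"
  by (auto simp: span_def lin_comb_def numeral_2_eq_2 upt_rec in_A_def intro!: exI[of _ "\<lambda>_. 0"])

lemma span1: "span f 2 [[a,b]] = {[(k*a) mod f, (k*b) mod f] | k. True}"
proof -
  have lc: "lin_comb f 2 [[a,b]] c = [(c 0*a) mod f, (c 0*b) mod f]" for c
    by (simp add: lin_comb_def numeral_2_eq_2 upt_rec)
  have iA: "in_A f (k mod f)" for k by (simp add: in_A_def)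
  have mm: "(k mod f * x) mod f = (k * x) mod f" for k x by (simp add: mod_simps)
  show ?thesis
  proof (intro equalityI subsetI)
    fix v assume "v \<in> span f 2 [[a,b]]"
    then obtain c where "v = lin_comb f 2 [[a,b]] c" unfolding span_def by blast
    then show "v \<in> {[(k*a) mod f, (k*b) mod f] | k. True}" unfolding lc by blast
  next
    fix v assume "v \<in> {[(k*a) mod f, (k*b) mod f] | k. True}"
    then obtain k where v: "v = [(k*a) mod f, (k*b) mod f]" by blast
    have "v = lin_comb f 2 [[a,b]] (\<lambda>_. k mod f)" unfolding lc v mm ..
    then show "v \<in> span f 2 [[a,b]]" unfolding span_def using iA by blast
  qed
qed

lemma span2: "span f 2 [[a,b],[c,d]] = {[(k*a + l*c) mod f, (k*b + l*d) mod f] | k l. True}"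
proof -
  have lc: "lin_comb f 2 [[a,b],[c,d]] e = [(e 0*a + e 1 * c) mod f, (e 0*b + e 1 * d) mod f]" for e
    by (simp add: lin_comb_def numeral_2_eq_2 upt_rec)
  have iA: "in_A f (k mod f)" for k by (simp add: in_A_def)
  have mm: "(k mod f * x + l mod f * y) mod f = (k * x + l * y) mod f" for k l x y
  proof -
    have "(k mod f * x + l mod f * y) mod f = ((k mod f * x) mod f + (l mod f * y) mod f) mod f"
      by (rule mod_add_eq[symmetric])
    also have "\<dots> = ((k * x) mod f + (l * y) mod f) mod f" by (simp only: mod_mult_left_eq)
    also have "\<dots> = (k * x + l * y) mod f" by (rule mod_add_eq)
    finally show ?thesis .
  qed
  show ?thesis
  proof (intro equalityI subsetI)
    fix v assume "v \<in> span f 2 [[a,b],[c,d]]"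
    then obtain e where "v = lin_comb f 2 [[a,b],[c,d]] e" unfolding span_def by blast
    then show "v \<in> {[(k*a + l*c) mod f, (k*b + l*d) mod f] | k l. True}" unfolding lc by blast
  next
    fix v assume "v \<in> {[(k*a + l*c) mod f, (k*b + l*d) mod f] | k l. True}"
    then obtain k l where v: "v = [(k*a + l*c) mod f, (k*b + l*d) mod f]" by blast
    let ?e = "\<lambda>j::nat. if j = 0 then k mod f else l mod f"
    have "v = lin_comb f 2 [[a,b],[c,d]] ?e" unfolding lc v by (simp add: mm)
    moreover have "\<forall>j. in_A f (?e j)" using iA by simp
    ultimately show "v \<in> span f 2 [[a,b],[c,d]]" unfolding span_def by blast
  qed
qed

lemma lidx_a: "a \<noteq> 0 \<Longrightarrow> lidx [a,b] = 0"
  unfolding lidx_def by (rule Least_equality) auto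
lemma lidx_b: "b \<noteq> 0 \<Longrightarrow> lidx [0,b] = 1"
  unfolding lidx_def by (rule Least_equality) (auto simp: less_Suc_eq_0_disj)


lemma modlin: "((a mod f * u) mod f + (b mod f * v) mod f) mod (f::'a::field poly) = (a*u + b*v) mod f"
proof -
  have "((a mod f * u) mod f + (b mod f * v) mod f) mod f = ((a * u) mod f + (b * v) mod f) mod f"
    by (simp only: mod_mult_left_eq)
  also have "\<dots> = (a*u + b*v) mod f" by (rule mod_add_eq)
  finally show ?thesis .
qed

lemma ip_mod: "((a mod f)*(b mod f) + (c mod f)*(d mod f)) mod (f::'a::field poly) = (a*b + c*d) mod f"
proof -
  have "((a mod f)*(b mod f) + (c mod f)*(d mod f)) mod f
      = (((a mod f)*(b mod f)) mod f + ((c mod f)*(d mod f)) mod f) mod f"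
    by (rule mod_add_eq[symmetric])
  also have "\<dots> = ((a*b) mod f + (c*d) mod f) mod f" by (simp only: mod_mult_eq)
  also have "\<dots> = (a*b + c*d) mod f" by (rule mod_add_eq)
  finally show ?thesis .
qed

lemma modeq: "in_A f x \<Longrightarrow> f dvd y - x \<Longrightarrow> y mod f = (x::'a::field poly)"
  unfolding in_A_def by (metis mod_eq_dvd_iff)

lemma dvd_inA_zero: "in_A f k \<Longrightarrow> f dvd k \<Longrightarrow> (k::'a::field poly) = 0"
  unfolding in_A_def by (simp add: dvd_eq_mod_eq_0)

lemma inA_mod: "in_A f (x mod f)"
  by (simp add: in_A_def)

context
  fixes f :: "'a::field poly" and C
  assumes code: "is_code f 2 C"
begin

lemma CA: "v \<in> C \<Longrightarrow> \<exists>a b. v = [a,b] \<and> in_A f a \<and> in_A f b"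
  using code by (auto simp: is_code_def Avec2)

lemma CA2: "[a,b] \<in> C \<Longrightarrow> in_A f a \<and> in_A f b"
  using CA by blast

lemma lin: assumes "[u0,u1] \<in> C" "[v0,v1] \<in> C"
  shows "[(a*u0+b*v0) mod f, (a*u1+b*v1) mod f] \<in> C"
proof -
  have iA: "in_A f (k mod f)" for k by (simp add: in_A_def)
  have "smul f (a mod f) [u0,u1] \<in> C" "smul f (b mod f) [v0,v1] \<in> C"
    using code assms iA unfolding is_code_def by blast+
  then have "vadd f (smul f (a mod f) [u0,u1]) (smul f (b mod f) [v0,v1]) \<in> C"
    using code unfolding is_code_def by blast
  then show ?thesis by (simp add: modlin)
qed

lemma sm: assumes "[u0,u1] \<in> C" shows "[(a*u0) mod f, (a*u1) mod f] \<in> C"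
  using lin[OF assms assms, of a 0] by simp

lemma zeroC: "[0,0] \<in> C"
  using code unfolding is_code_def by (simp add: numeral_2_eq_2)

end



lemma CGM1I:
  assumes "in_A f 1" "in_A f g2" "span f 2 [[1,g2]] = C"
  shows "is_CGM f 2 C [[1,g2]]"
proof -
  have l: "lidx [1,g2] = 0" by (rule lidx_a) simp
  have "smul f (f div lent [1,g2]) [1,g2] = [0,0]" by (simp add: lent_def l)
  then have s: "smul f (f div lent [1,g2]) [1,g2] \<in> span f 2 []" by (simp add: span0)
  have n: "\<exists>i<2. [1,g2] ! i \<noteq> (0::'a poly)" by (intro exI[of _ 0]) simp
  show ?thesis unfolding is_CGM_def
    using assms s n by (auto simp: Avec_def lent_def l)
qed

lemma CGM2I:
  assumes "in_A f a" "in_A f b" "in_A f d" "a \<noteq> 0" "d \<noteq> 0"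
    "span f 2 [[a,b],[0,d]] = C" "lead_coeff a = 1" "a dvd f" "lead_coeff d = 1" "d dvd f"
    "smul f (f div a) [a,b] \<in> span f 2 [[0,d]]" "smul f (f div d) [0,d] \<in> span f 2 []"
    "b = 0 \<or> degree b < degree d"
  shows "is_CGM f 2 C [[a,b],[0,d]]"
proof -
  have l1: "lidx [a,b] = 0" by (rule lidx_a) fact
  have l2: "lidx [0,d] = 1" by (rule lidx_b) fact
  have e1: "lent [a,b] = a" by (simp add: lent_def l1)
  have e2: "lent [0,d] = d" by (simp add: lent_def l2)
  have c1: "\<forall>i j. i < j \<and> j < length [[a,b],[0,d]] \<longrightarrow>
      lidx ([[a,b],[0,d]] ! i) < lidx ([[a,b],[0,d]] ! j)"
  proof (intro allI impI)
    fix i j :: nat assume "i < j \<and> j < length [[a,b],[0,d]]"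
    then have "i = 0" "j = 1" by auto
    then show "lidx ([[a,b],[0,d]] ! i) < lidx ([[a,b],[0,d]] ! j)" using l1 l2 by simp
  qed
  have c2: "\<forall>i<length [[a,b],[0,d]]. smul f (f div lent ([[a,b],[0,d]] ! i)) ([[a,b],[0,d]] ! i)
      \<in> span f 2 (drop (Suc i) [[a,b],[0,d]])"
  proof (intro allI impI)
    fix i :: nat assume "i < length [[a,b],[0,d]]"
    then have "i = 0 \<or> i = 1" by auto
    then show "smul f (f div lent ([[a,b],[0,d]] ! i)) ([[a,b],[0,d]] ! i)
      \<in> span f 2 (drop (Suc i) [[a,b],[0,d]])"
      using assms(11,12) e1 e2 by auto
  qed
  have c3: "\<forall>i j. j < i \<and> i < length [[a,b],[0,d]] \<longrightarrow>
        [[a,b],[0,d]] ! j ! lidx ([[a,b],[0,d]] ! i) = 0 \<or>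
        degree ([[a,b],[0,d]] ! j ! lidx ([[a,b],[0,d]] ! i)) < degree (lent ([[a,b],[0,d]] ! i))"
  proof (intro allI impI)
    fix i j :: nat assume "j < i \<and> i < length [[a,b],[0,d]]"
    then have "j = 0" "i = 1" by auto
    then show "[[a,b],[0,d]] ! j ! lidx ([[a,b],[0,d]] ! i) = 0 \<or>
        degree ([[a,b],[0,d]] ! j ! lidx ([[a,b],[0,d]] ! i)) < degree (lent ([[a,b],[0,d]] ! i))"
      using l2 e2 assms(13) by simp
  qed
  have c0: "\<forall>r\<in>set [[a,b],[0,d]]. r \<in> Avec f 2 \<and> (\<exists>i<2. r ! i \<noteq> 0)"
  proof -
    have "[a,b] \<in> Avec f 2" "[0,d] \<in> Avec f 2" using assms(1-3) by (auto simp: Avec_def in_A_def)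
    moreover have "\<exists>i<2. [a,b] ! i \<noteq> 0" using assms(4) by (intro exI[of _ 0]) simp
    moreover have "\<exists>i<2. [0,d] ! i \<noteq> 0" using assms(5) by (intro exI[of _ 1]) simp
    ultimately show ?thesis by simp
  qed
  have c4: "\<forall>r\<in>set [[a,b],[0,d]]. lead_coeff (lent r) = 1 \<and> lent r dvd f"
    using e1 e2 assms(7-10) by simp
  show ?thesis unfolding is_CGM_def using c0 c1 c2 c3 c4 assms(6) by blast
qed




lemma CGM_span: "is_CGM f l C G \<Longrightarrow> C = span f l G"
  by (simp add: is_CGM_def)

lemma CGM_rows: "is_CGM f 2 C G \<Longrightarrow> r \<in> set G \<Longrightarrow> x \<in> set r \<Longrightarrow> in_A f x"
  by (auto simp: is_CGM_def Avec_def)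

lemma bwd1:
  fixes f :: "'a::field poly"
  assumes df: "degree f \<ge> 1" and cgm: "is_CGM f 2 C [[1, g2]]" and sq: "(g2 ^ 2) mod f = (-1) mod f"
  shows "C = dual f 2 C"
proof -
  have C: "C = {[(k*1) mod f, (k*g2) mod f] | k. True}" using CGM_span[OF cgm] span1[of f 1 g2] by simp
  have h: "f dvd g2^2 + 1" using sq unfolding mod_eq_dvd_iff by simp
  have g2A: "in_A f g2" using CGM_rows[OF cgm] by simp
  have oneA: "in_A f 1" using df by (simp add: in_A_def mod_poly_less)
  show ?thesis
  proof (intro equalityI subsetI)
    fix v assume "v \<in> C"
    then obtain k where v: "v = [k mod f, (k*g2) mod f]" using C by auto
    have "\<forall>c\<in>C. (k mod f * c!0 + (k*g2) mod f * c!1) mod f = 0"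
    proof
      fix c assume "c \<in> C"
      then obtain l where c: "c = [l mod f, (l*g2) mod f]" using C by auto
      have "(k mod f * c!0 + (k*g2) mod f * c!1) mod f = (k*l + (k*g2)*(l*g2)) mod f"
        unfolding c by (simp add: ip_mod)
      also have "k*l + (k*g2)*(l*g2) = k*l*(g2^2+1)" by (simp add: algebra_simps power2_eq_square)
      also have "(k*l*(g2^2+1)) mod f = 0" using h by (simp add: dvd_eq_mod_eq_0[symmetric])
      finally show "(k mod f * c!0 + (k*g2) mod f * c!1) mod f = 0" .
    qed
    then show "v \<in> dual f 2 C" unfolding v dual2 by (simp add: inA_mod)
  next
    fix v assume "v \<in> dual f 2 C"
    then obtain b1 b2 where v: "v = [b1,b2]" and bA: "in_A f b1" "in_A f b2"
      and bp: "\<forall>c\<in>C. (b1*c!0 + b2*c!1) mod f = 0" by (auto simp: dual2')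
    have "[1,g2] \<in> C" using C oneA g2A
      by (auto simp: in_A_def intro!: exI[of _ 1])
    then have "f dvd b1 + b2*g2" using bp by (auto simp: dvd_eq_mod_eq_0)
    have e1: "(-(b2*g2)) mod f = b1"
      by (rule modeq[OF bA(1)]) (metis \<open>f dvd b1 + b2*g2\<close> dvd_minus_iff minus_diff_eq diff_minus_eq_add add.commute)
    have "f dvd b2 * (g2^2+1)" using h by simp
    then have e2: "(-(b2*g2)*g2) mod f = b2"
    proof (intro modeq[OF bA(2)])
      have "-(b2*g2)*g2 - b2 = -(b2 * (g2^2+1))" by (simp add: power2_eq_square algebra_simps)
      then show "f dvd -(b2*g2)*g2 - b2" using \<open>f dvd b2 * (g2^2+1)\<close> by simp
    qed
    show "v \<in> C" unfolding C v using e1 e2 by (intro CollectI exI[of _ "-(b2*g2)"]) simp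
  qed
qed


lemma bwd2:
  fixes f :: "'a::field poly"
  assumes cgm: "is_CGM f 2 C [[g1, g2], [0, g3]]" and g10: "g1 \<noteq> 0" and g30: "g3 \<noteq> 0"
    and r: "g' ^ 2 = r * f' - 1" and ff: "f = g1 ^ 2 * f'" and g3e: "g3 = g1 * f'" and g2e: "g2 = g1 * g'"
  shows "C = dual f 2 C"
proof -
  have C: "C = {[(k*g1 + l*0) mod f, (k*g2 + l*g3) mod f] | k l. True}"
    using CGM_span[OF cgm] span2[of f g1 g2 0 g3] by simp
  have g1A: "in_A f g1" using CGM_rows[OF cgm, of "[g1,g2]"] by simp
  have g2A: "in_A f g2" using CGM_rows[OF cgm, of "[g1,g2]"] by simp
  have g3A: "in_A f g3" using CGM_rows[OF cgm, of "[0,g3]"] by simp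
  have r1: "g'^2 + 1 = r * f'" using r by (simp add: algebra_simps)
  show ?thesis
  proof (intro equalityI subsetI)
    fix v assume "v \<in> C"
    then obtain k l where v: "v = [(k*g1) mod f, (k*g2 + l*g3) mod f]" using C by auto
    have "\<forall>c\<in>C. ((k*g1) mod f * c!0 + (k*g2 + l*g3) mod f * c!1) mod f = 0"
    proof
      fix c assume "c \<in> C"
      then obtain m n where c: "c = [(m*g1) mod f, (m*g2 + n*g3) mod f]" using C by auto
      have "((k*g1) mod f * c!0 + (k*g2 + l*g3) mod f * c!1) mod f
          = ((k*g1)*(m*g1) + (k*g2 + l*g3)*(m*g2 + n*g3)) mod f"
        unfolding c by (simp add: ip_mod)
      also have "(k*g1)*(m*g1) + (k*g2 + l*g3)*(m*g2 + n*g3)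
          = g1^2 * (k*m*(g'^2+1) + f' * (k*g'*n + l*m*g' + l*n*f'))"
        unfolding g2e g3e by (simp add: algebra_simps power2_eq_square)
      also have "\<dots> = f * (k*m*r + (k*g'*n + l*m*g' + l*n*f'))"
        unfolding r1 ff by (simp add: algebra_simps)
      finally show "((k*g1) mod f * c!0 + (k*g2 + l*g3) mod f * c!1) mod f = 0" by simp
    qed
    then show "v \<in> dual f 2 C" unfolding v dual2 by (simp add: inA_mod)
  next
    fix v assume "v \<in> dual f 2 C"
    then obtain b1 b2 where v: "v = [b1,b2]" and bA: "in_A f b1" "in_A f b2"
      and bp: "\<forall>c\<in>C. (b1*c!0 + b2*c!1) mod f = 0" by (auto simp: dual2')
    have "[g1,g2] = [(1*g1 + 0*0) mod f, (1*g2 + 0*g3) mod f]" using g1A g2A by (simp add: in_A_def)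
    then have "[g1,g2] \<in> C" unfolding C by blast
    then have d1: "f dvd b1*g1 + b2*g2" using bp by (auto simp: dvd_eq_mod_eq_0)
    have "[0,g3] = [(0*g1 + 1*0) mod f, (0*g2 + 1*g3) mod f]" using g3A by (simp add: in_A_def)
    then have "[0,g3] \<in> C" unfolding C by blast
    then have d2: "f dvd b2*g3" using bp by (auto simp: dvd_eq_mod_eq_0)
    have f'0: "f' \<noteq> 0" using g30 g3e by auto
    have "(g1*f')*g1 dvd (g1*f')*b2" using d2 unfolding ff g3e by (simp add: power2_eq_square algebra_simps)
    then have "g1 dvd b2" using g30 g3e by simp
    then obtain t where t: "b2 = g1*t" by (rule dvdE)
    have "g1*(g1*f') dvd g1*(b1 + g1*t*g')" using d1 unfolding ff t g2e
      by (simp add: power2_eq_square algebra_simps)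
    then have d3: "g1*f' dvd b1 + g1*t*g'" using g10 by simp
    then have "g1 dvd b1 + g1*t*g'" using dvd_mult_left by blast
    then have "g1 dvd b1" by (simp add: dvd_add_left_iff mult.assoc)
    then obtain s where s: "b1 = g1*s" by (rule dvdE)
    have "g1*f' dvd g1*(s + t*g')" using d3 unfolding s by (simp add: algebra_simps)
    then have "f' dvd s + t*g'" using g10 by simp
    then obtain u where u: "s + t*g' = f'*u" by (rule dvdE)
    define l where "l = t*r - u*g'"
    have "s*g' + l*f' = (s + t*g')*g' - t*(g'^2+1) + t*r*f' - u*g'*f' + t"
      unfolding l_def by (simp add: algebra_simps power2_eq_square)
    also have "\<dots> = t" unfolding u r1 by (simp add: algebra_simps)
    finally have sl: "s*g' + l*f' = t" .
    have e1: "(s*g1 + l*0) mod f = b1" using bA(1) unfolding s in_A_def by (simp add: mult.commute)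
    have "s*g2 + l*g3 = b2" unfolding t g2e g3e using sl[symmetric] by (simp add: algebra_simps)
    then have e2: "(s*g2 + l*g3) mod f = b2" using bA(2) unfolding in_A_def by simp
    show "v \<in> C" unfolding C v using e1 e2 by blast
  qed
qed




lemma fwd:
  fixes f :: "'a::field poly"
  assumes mon: "lead_coeff f = 1" and df: "degree f \<ge> 1" and code: "is_code f 2 C"
    and sd: "C = dual f 2 C"
  shows "(\<exists>g2. is_CGM f 2 C [[1, g2]] \<and> (g2 ^ 2) mod f = (-1) mod f) \<or>
     (\<exists>g1 g2 g3. is_CGM f 2 C [[g1, g2], [0, g3]] \<and>
        g1 \<noteq> 0 \<and> g3 \<noteq> 0 \<and> lead_coeff g1 = 1 \<and> lead_coeff g3 = 1 \<and>
        g1 dvd f \<and> g3 dvd f \<and> g3 dvd (f div g1) * g2 \<and>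
        (g2 = 0 \<or> degree g2 < degree g3) \<and>
        (\<exists>g' f' r. g' ^ 2 = r * f' - 1 \<and> f = g1 ^ 2 * f' \<and> g3 = g1 * f' \<and> g2 = g1 * g'))"
proof -
  have f0: "f \<noteq> 0" using df by auto
  note CA2 = CA2[OF code] and lin = lin[OF code] and sm = sm[OF code] and zeroC = zeroC[OF code]
  have pair: "f dvd u0*v0 + u1*v1" if "[u0,u1] \<in> C" "[v0,v1] \<in> C" for u0 u1 v0 v1
  proof -
    have "[u0,u1] \<in> dual f 2 C" using that sd by simp
    then show ?thesis using that(2) unfolding dual2 by (auto simp: dvd_eq_mod_eq_0)
  qed
  have indual: "[a,b] \<in> C" if "in_A f a" "in_A f b" "\<And>v0 v1. [v0,v1] \<in> C \<Longrightarrow> f dvd a*v0 + b*v1" for a b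
  proof -
    have "\<forall>c\<in>C. (a*c!0 + b*c!1) mod f = 0"
    proof
      fix c assume "c \<in> C"
      then obtain v0 v1 where "c = [v0,v1]" "[v0,v1] \<in> C" using CA[OF code] by blast
      then show "(a*c!0 + b*c!1) mod f = 0" using that(3) by (simp add: dvd_eq_mod_eq_0)
    qed
    then have "[a,b] \<in> dual f 2 C" using that(1,2) unfolding dual2 by simp
    then show ?thesis using sd by simp
  qed
  define J where "J = {p. \<exists>v1. [p mod f, v1] \<in> C}"
  have J_lin: "a*p + b*q \<in> J" if pq: "p \<in> J" "q \<in> J" for a b p q
  proof -
    obtain v1 w1 where "[p mod f, v1] \<in> C" "[q mod f, w1] \<in> C" using pq unfolding J_def by blast
    from lin[OF this, of a b] have "[(a*(p mod f) + b*(q mod f)) mod f, (a*v1+b*w1) mod f] \<in> C" .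
    moreover have "(a*(p mod f) + b*(q mod f)) mod f = (a*p + b*q) mod f"
    proof -
      have "(a*(p mod f) + b*(q mod f)) - (a*p + b*q) = f * (-(a*(p div f) + b*(q div f)))"
        unfolding minus_mult_div_eq_mod[symmetric] by (simp add: algebra_simps)
      then show ?thesis unfolding mod_eq_dvd_iff by simp
    qed
    ultimately show ?thesis unfolding J_def by auto
  qed
  have fJ: "f \<in> J" using zeroC unfolding J_def by auto
  have CJ: "v0 \<in> J" if "[v0,v1] \<in> C" for v0 v1
    using that CA2[OF that] unfolding J_def in_A_def by auto
  define n where "n = (LEAST n. \<exists>p\<in>J. p \<noteq> 0 \<and> degree p = n)"
  have "\<exists>p\<in>J. p \<noteq> 0 \<and> degree p = n"
    unfolding n_def by (rule LeastI[of _ "degree f"]) (use fJ f0 in blast)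
  then obtain p0 where p0: "p0 \<in> J" "p0 \<noteq> 0" "degree p0 = n" by blast
  have nmin: "n \<le> degree p" if "p \<in> J" "p \<noteq> 0" for p
    unfolding n_def by (rule Least_le) (use that in blast)
  define g1 where "g1 = smult (inverse (lead_coeff p0)) p0"
  have g1J: "g1 \<in> J" using J_lin[OF p0(1) p0(1), of "[:inverse (lead_coeff p0):]" 0]
    by (simp add: g1_def)
  have g1n: "g1 \<noteq> 0" "degree g1 = n" "lead_coeff g1 = 1" using p0 by (auto simp: g1_def)
  have g1dvd: "g1 dvd p" if "p \<in> J" for p
  proof (rule ccontr)
    assume nd: "\<not> g1 dvd p"
    then have m0: "p mod g1 \<noteq> 0" by (simp add: dvd_eq_mod_eq_0)
    have "p mod g1 = 1*p + (-(p div g1))*g1" by (simp add: minus_div_mult_eq_mod[symmetric])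
    then have "p mod g1 \<in> J" using J_lin[OF that g1J, of 1 "-(p div g1)"] by simp
    from nmin[OF this m0] degree_mod_less'[OF g1n(1) m0] g1n(2) show False by simp
  qed
  have g1f: "g1 dvd f" using g1dvd fJ by blast
  have Cdvd0: "g1 dvd v0" if "[v0,v1] \<in> C" for v0 v1 using g1dvd CJ that by blast
  have dg1: "degree g1 < degree f"
  proof (rule ccontr)
    assume "\<not> degree g1 < degree f"
    then have z: "v0 = 0" if "[v0,v1] \<in> C" for v0 v1
    proof -
      have "in_A f v0" using CA2[OF that] by simp
      moreover have "g1 dvd v0" using Cdvd0[OF that] .
      ultimately show ?thesis using \<open>\<not> degree g1 < degree f\<close> f0
        by (metis dvd_imp_degree_le inA_iff leD le_less_trans)
    qed
    have "in_A f 1" using df by (simp add: in_A_def mod_poly_less)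
    moreover have "in_A f 0" by (simp add: in_A_def)
    ultimately have "[1,0] \<in> C" by (rule indual) (use z in force)
    then show False using z[of 1 0] by simp
  qed
  have g1A: "in_A f g1" using dg1 f0 by (simp add: inA_iff)
  obtain g2 where g12: "[g1, g2] \<in> C" using g1J g1A unfolding J_def in_A_def by auto
  have g2A: "in_A f g2" using CA2[OF g12] by simp
  show ?thesis
  proof (cases "degree g1 = 0")
    case True
    have "g1 = [:coeff g1 0:]" using True by (simp add: degree_0_id)
    then have g1one: "g1 = 1" using g1n(3) True by (metis one_pCons)
    have c1: "[1,g2] \<in> C" using g12 g1one by simp
    have h: "f dvd 1 + g2*g2" using pair[OF c1 c1] by simp
    have K0: "k = 0" if "[0,k] \<in> C" for k
    proof -
      have "f dvd k*g2" using pair[OF that c1] by simp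
      then have kg: "f dvd k*g2*g2" by simp
      have "f dvd k*(1 + g2*g2)" using h by simp
      from this kg have "f dvd k*(1 + g2*g2) - k*g2*g2" by (rule dvd_diff)
      then have "f dvd k" by (simp add: algebra_simps)
      then show ?thesis using CA2[OF that] dvd_inA_zero by blast
    qed
    have oneA: "in_A f 1" using df by (simp add: in_A_def mod_poly_less)
    have sp: "span f 2 [[1,g2]] = C"
    proof (intro equalityI subsetI)
      fix v assume "v \<in> span f 2 [[1,g2]]"
      then obtain k where "v = [(k*1) mod f, (k*g2) mod f]" unfolding span1 by blast
      then show "v \<in> C" using sm[OF c1, of k] by simp
    next
      fix v assume "v \<in> C"
      then obtain v0 v1 where v: "v = [v0,v1]" "in_A f v0" "in_A f v1" using CA[OF code] by blast
      have "[(1*v0 + (-v0)*1) mod f, (1*v1 + (-v0)*g2) mod f] \<in> C"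
        using lin[OF \<open>v \<in> C\<close>[unfolded v(1)] c1] .
      then have "(v1 - v0*g2) mod f = 0" using K0 by simp
      then have "(v0*g2) mod f = v1" using v(3) by (metis mod_eq_dvd_iff dvd_eq_mod_eq_0 in_A_def minus_diff_eq dvd_minus_iff)
      moreover have "(v0*1) mod f = v0" using v(2) by (simp add: in_A_def)
      ultimately show "v \<in> span f 2 [[1,g2]]" unfolding span1 v(1) by force
    qed
    have "is_CGM f 2 C [[1, g2]]" by (rule CGM1I[OF oneA g2A sp])
    moreover have "(g2 ^ 2) mod f = (-1) mod f"
      unfolding mod_eq_dvd_iff using h by (simp add: power2_eq_square add.commute)
    ultimately show ?thesis by blast
  next
    case False
    obtain h where fh: "f = g1 * h" using g1f by (rule dvdE)
    have h0: "h \<noteq> 0" using fh f0 by auto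
    have degf: "degree f = degree g1 + degree h" using fh g1n(1) h0 by (simp add: degree_mult_eq)
    have hA: "in_A f h" using degf False f0 by (simp add: inA_iff)
    have zA: "in_A f 0" by (simp add: in_A_def)
    have "[h,0] \<in> C"
    proof (rule indual[OF hA zA])
      fix v0 v1 assume "[v0,v1] \<in> C"
      then obtain a where "v0 = g1*a" using Cdvd0 by (blast elim: dvdE)
      then show "f dvd h*v0 + 0*v1" unfolding fh by simp
    qed
    then have "g1 dvd h" using Cdvd0 by blast
    then obtain f' where hf: "h = g1 * f'" by (rule dvdE)
    have ff: "f = g1^2 * f'" unfolding fh hf by (simp add: power2_eq_square)
    have f'0: "f' \<noteq> 0" using h0 hf by auto
    have sq1: "g1^2 dvd f" unfolding ff by simp
    have "f dvd g1*g1 + g2*g2" using pair[OF g12 g12] .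
    then have "g1^2 dvd g1*g1 + g2*g2" using sq1 dvd_trans by blast
    then have "g1^2 dvd g2^2" by (simp add: power2_eq_square dvd_add_right_iff)
    then have "g1 dvd g2" by (rule sq_dvd_sq)
    then obtain g0 where g20: "g2 = g1 * g0" by (rule dvdE)
    have "g1^2 * f' dvd g1^2 * (1 + g0*g0)"
      using \<open>f dvd g1*g1 + g2*g2\<close> unfolding ff g20 by (simp add: power2_eq_square algebra_simps)
    then have f'g0: "f' dvd 1 + g0*g0" using g1n(1) by simp
    have Kdvd1: "g1 dvd k" if "[0,k] \<in> C" for k
    proof -
      have "f dvd k*k" using pair[OF that that] by simp
      then have "g1^2 dvd k^2" using sq1 dvd_trans by (metis power2_eq_square)
      then show ?thesis by (rule sq_dvd_sq)
    qed
    have Cdvd1: "g1 dvd v1" if vC: "[v0,v1] \<in> C" for v0 v1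
    proof -
      obtain a where a: "v0 = g1*a" using Cdvd0[OF vC] by (rule dvdE)
      have "[(1*v0 + (-a)*g1) mod f, (1*v1 + (-a)*g2) mod f] \<in> C" using lin[OF vC g12] .
      then have "[0, (v1 - a*g2) mod f] \<in> C" using a by (simp add: algebra_simps)
      then have "g1 dvd (v1 - a*g2) mod f" by (rule Kdvd1)
      then have "g1 dvd v1 - a*g2" using g1f by (simp add: dvd_mod_iff)
      moreover have "g1 dvd a*g2" unfolding g20 by simp
      ultimately show ?thesis by (metis dvd_add diff_add_cancel)
    qed
    define g3 where "g3 = g1 * f'"
    have g3h: "g3 = h" unfolding g3_def hf ..
    have g30: "g3 \<noteq> 0" using h0 g3h by simp
    have g3A: "in_A f g3" using hA g3h by simp
    have c3: "[0,g3] \<in> C"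
    proof (rule indual[OF zA g3A])
      fix v0 v1 assume "[v0,v1] \<in> C"
      then obtain b where "v1 = g1*b" using Cdvd1 by (blast elim: dvdE)
      then show "f dvd 0*v0 + g3*v1" unfolding fh g3h by simp
    qed
    have Kdvd: "g3 dvd k" if kC: "[0,k] \<in> C" for k
    proof -
      obtain m where m: "k = g1*m" using Kdvd1[OF kC] by (rule dvdE)
      have "f dvd 0*g1 + k*g2" using pair[OF kC g12] .
      then have "g1^2 * f' dvd g1^2 * (m*g0)" unfolding ff m g20 by (simp add: power2_eq_square algebra_simps)
      then have "f' dvd m*g0" using g1n(1) by simp
      then have a1: "f' dvd m*g0*g0" by simp
      have "f' dvd m*(1 + g0*g0)" using f'g0 by simp
      from this a1 have "f' dvd m*(1 + g0*g0) - m*g0*g0" by (rule dvd_diff)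
      then have "f' dvd m" by (simp add: algebra_simps)
      then show ?thesis unfolding g3_def m by simp
    qed
    define g' where "g' = g0 mod f'"
    define q where "q = g0 div f'"
    define g2' where "g2' = g1 * g'"
    have g0q: "g0 = q*f' + g'" unfolding q_def g'_def by simp
    have g2q: "g2 = q*g3 + g2'" unfolding g20 g2'_def g3_def g0q by (simp add: algebra_simps)
    have dg': "g' = 0 \<or> degree g' < degree f'" unfolding g'_def using degree_mod_less[OF f'0] by simp
    have dg2': "g2' = 0 \<or> degree g2' < degree g3"
    proof (cases "g' = 0")
      case False
      then have "degree g2' = degree g1 + degree g'" unfolding g2'_def using g1n(1) by (simp add: degree_mult_eq)
      moreover have "degree g3 = degree g1 + degree f'" unfolding g3_def using g1n(1) f'0 by (simp add: degree_mult_eq)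
      ultimately show ?thesis using dg' False by simp
    qed (simp add: g2'_def)
    have dg3: "degree g3 < degree f" using degf False g3h by simp
    have g2'A: "in_A f g2'" using dg2' dg3 f0 by (auto simp: inA_iff)
    have c12: "[g1, g2'] \<in> C"
    proof -
      have "[(1*g1 + (-q)*0) mod f, (1*g2 + (-q)*g3) mod f] \<in> C" using lin[OF g12 c3] .
      moreover have "1*g2 + (-q)*g3 = g2'" unfolding g2q by simp
      ultimately show ?thesis using g1A g2'A by (simp add: in_A_def)
    qed
    have "f' dvd g'^2 + 1"
    proof -
      have "1 + g0*g0 = (g'^2 + 1) + f'*(q*q*f' + 2*q*g')" unfolding g0q
        by (simp add: algebra_simps power2_eq_square)
      then show ?thesis using f'g0 by (metis dvd_add_left_iff dvd_triv_left)
    qed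
    then obtain r where r: "g'^2 + 1 = f' * r" by (rule dvdE)
    have req: "g'^2 = r*f' - 1" using r by (simp add: algebra_simps)
    have sp: "span f 2 [[g1,g2'],[0,g3]] = C"
    proof (intro equalityI subsetI)
      fix v assume "v \<in> span f 2 [[g1,g2'],[0,g3]]"
      then obtain k l where "v = [(k*g1 + l*0) mod f, (k*g2' + l*g3) mod f]" unfolding span2 by blast
      then show "v \<in> C" using lin[OF c12 c3, of k l] by simp
    next
      fix v assume "v \<in> C"
      then obtain v0 v1 where v: "v = [v0,v1]" "in_A f v0" "in_A f v1" using CA[OF code] by blast
      obtain a where a: "v0 = g1*a" using Cdvd0 \<open>v \<in> C\<close> v(1) by (blast elim: dvdE)
      have "[(1*v0 + (-a)*g1) mod f, (1*v1 + (-a)*g2') mod f] \<in> C"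
        using lin[OF \<open>v \<in> C\<close>[unfolded v(1)] c12] .
      then have "[0, (v1 - a*g2') mod f] \<in> C" using a by (simp add: algebra_simps)
      then have "g3 dvd (v1 - a*g2') mod f" by (rule Kdvd)
      then have "g3 dvd v1 - a*g2'" using g3h fh by (simp add: dvd_mod_iff)
      then obtain l where l: "v1 - a*g2' = g3*l" by (rule dvdE)
      have e1: "(a*g1 + l*0) mod f = v0" using v(2) a by (simp add: in_A_def mult.commute)
      have "a*g2' + l*g3 = v1" using l by (simp add: algebra_simps)
      then have e2: "(a*g2' + l*g3) mod f = v1" using v(3) by (simp add: in_A_def)
      show "v \<in> span f 2 [[g1,g2'],[0,g3]]" unfolding span2 v(1) using e1 e2 by blast
    qed
    have lc3: "lead_coeff g3 = 1"
    proof -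
      have "lead_coeff f = lead_coeff g1 ^ 2 * lead_coeff f'" unfolding ff by (simp add: lead_coeff_mult lead_coeff_power)
      then have "lead_coeff f' = 1" using mon g1n(3) by simp
      then show ?thesis unfolding g3_def using g1n(3) by (simp add: lead_coeff_mult)
    qed
    have g3f: "g3 dvd f" unfolding g3h fh by simp
    have fdg1: "f div g1 = g3" unfolding fh g3h using g1n(1) by simp
    have fdg3: "f div g3 = g1" unfolding fh g3h using h0 by simp
    have s1: "smul f (f div g1) [g1,g2'] \<in> span f 2 [[0,g3]]"
    proof -
      have "smul f (f div g1) [g1,g2'] = [(g3*g1) mod f, (g3*g2') mod f]" unfolding fdg1 by simp
      also have "\<dots> = [((g1*g') * 0) mod f, ((g1*g')*g3) mod f]"
        unfolding g3h fh g2'_def by (simp add: algebra_simps)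
      finally show ?thesis unfolding span1 by blast
    qed
    have s2: "smul f (f div g3) [0,g3] \<in> span f 2 []"
      unfolding fdg3 span0 using fh g3h by (simp add: mult.commute)
    have cgm: "is_CGM f 2 C [[g1, g2'], [0, g3]]"
      by (rule CGM2I[OF g1A g2'A g3A g1n(1) g30 sp g1n(3) g1f lc3 g3f s1 s2 dg2'])
    have "g3 dvd (f div g1) * g2'" unfolding fdg1 by simp
    moreover have "f = g1^2 * f'" "g3 = g1 * f'" "g2' = g1 * g'" using ff g3_def g2'_def by auto
    ultimately show ?thesis using cgm g1n g30 lc3 g1f g3f dg2' req by blast
  qed
qed


theorem mainTheorem8:
  fixes f :: "'a::{field,finite} poly" and C :: "'a poly list set"
  assumes "lead_coeff f = 1" and "degree f \<ge> 1"
    and "is_code f 2 C"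
  shows "C = dual f 2 C \<longleftrightarrow>
    ((\<exists>g2. is_CGM f 2 C [[1, g2]] \<and> (g2 ^ 2) mod f = (-1) mod f) \<or>
     (\<exists>g1 g2 g3. is_CGM f 2 C [[g1, g2], [0, g3]] \<and>
        g1 \<noteq> 0 \<and> g3 \<noteq> 0 \<and> lead_coeff g1 = 1 \<and> lead_coeff g3 = 1 \<and>
        g1 dvd f \<and> g3 dvd f \<and> g3 dvd (f div g1) * g2 \<and>
        (g2 = 0 \<or> degree g2 < degree g3) \<and>
        (\<exists>g' f' r. g' ^ 2 = r * f' - 1 \<and> f = g1 ^ 2 * f' \<and> g3 = g1 * f' \<and> g2 = g1 * g')))"
proof
  assume "C = dual f 2 C"
  then show "(\<exists>g2. is_CGM f 2 C [[1, g2]] \<and> (g2 ^ 2) mod f = (-1) mod f) \<or>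
     (\<exists>g1 g2 g3. is_CGM f 2 C [[g1, g2], [0, g3]] \<and>
        g1 \<noteq> 0 \<and> g3 \<noteq> 0 \<and> lead_coeff g1 = 1 \<and> lead_coeff g3 = 1 \<and>
        g1 dvd f \<and> g3 dvd f \<and> g3 dvd (f div g1) * g2 \<and>
        (g2 = 0 \<or> degree g2 < degree g3) \<and>
        (\<exists>g' f' r. g' ^ 2 = r * f' - 1 \<and> f = g1 ^ 2 * f' \<and> g3 = g1 * f' \<and> g2 = g1 * g'))"
    by (rule fwd[OF assms])
next
  assume "(\<exists>g2. is_CGM f 2 C [[1, g2]] \<and> (g2 ^ 2) mod f = (-1) mod f) \<or>
     (\<exists>g1 g2 g3. is_CGM f 2 C [[g1, g2], [0, g3]] \<and>
        g1 \<noteq> 0 \<and> g3 \<noteq> 0 \<and> lead_coeff g1 = 1 \<and> lead_coeff g3 = 1 \<and>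
        g1 dvd f \<and> g3 dvd f \<and> g3 dvd (f div g1) * g2 \<and>
        (g2 = 0 \<or> degree g2 < degree g3) \<and>
        (\<exists>g' f' r. g' ^ 2 = r * f' - 1 \<and> f = g1 ^ 2 * f' \<and> g3 = g1 * f' \<and> g2 = g1 * g'))"
  then show "C = dual f 2 C"
  proof
    assume "\<exists>g2. is_CGM f 2 C [[1, g2]] \<and> (g2 ^ 2) mod f = (-1) mod f"
    then obtain g2 where "is_CGM f 2 C [[1, g2]]" "(g2 ^ 2) mod f = (-1) mod f" by blast
    then show ?thesis using bwd1 assms(2) by blast
  next
    assume "\<exists>g1 g2 g3. is_CGM f 2 C [[g1, g2], [0, g3]] \<and>
        g1 \<noteq> 0 \<and> g3 \<noteq> 0 \<and> lead_coeff g1 = 1 \<and> lead_coeff g3 = 1 \<and>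
        g1 dvd f \<and> g3 dvd f \<and> g3 dvd (f div g1) * g2 \<and>
        (g2 = 0 \<or> degree g2 < degree g3) \<and>
        (\<exists>g' f' r. g' ^ 2 = r * f' - 1 \<and> f = g1 ^ 2 * f' \<and> g3 = g1 * f' \<and> g2 = g1 * g')"
    then obtain g1 g2 g3 g' f' r where "is_CGM f 2 C [[g1, g2], [0, g3]]" "g1 \<noteq> 0" "g3 \<noteq> 0"
      "g' ^ 2 = r * f' - 1" "f = g1 ^ 2 * f'" "g3 = g1 * f'" "g2 = g1 * g'" by blast
    then show ?thesis by (rule bwd2)
  qed
qed

end
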